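(* Let $f(t)=\sum_{i=0}^m a_it^i\in D[t;\sigma]$ be monic of degree $m\ge 2$ with $a_0\neq0$. Then for every $j\in\{1,\dots,m-1\}$, the left multiplication $L_{t^j}:S_f\to S_f$, $x\mapsto t^j\circ x$, is surjective if and only if $\sigma$ is surjective. In particular, if $\sigma$ is not surjective then $S_f$ is not a left division algebra.
   Context: $D$ is an associative division ring and $\sigma$ a ring endomorphism of $D$. $D[t;\sigma]$ is the skew polynomial ring with $ta=\sigma(a)t$. For monic $f$ of degree $m$, $S_f$ is the set of polynomials of degree $<m$ with multiplication $g\circ h=$ remainder of $gh$ upon right division by $f$ ($gh=qf+r$ with $\deg r<m$). $S_f$ is a left division algebra if $L_a(x)=a\circ x$ is bijective for every nonzero $a\in S_f$. *)

theory Defs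
  imports Main
begin

text \<open>Skew polynomials in D[t;sigma] are represented by their coefficient
functions nat => 'a with finite support; p n is the coefficient of t^n.
The multiplication is (a t^i)(b t^j) = a sigma^i(b) t^(i+j).\<close>

definition ring_endo :: "('a::division_ring \<Rightarrow> 'a) \<Rightarrow> bool" where
  "ring_endo \<sigma> \<longleftrightarrow> (\<forall>x y. \<sigma> (x + y) = \<sigma> x + \<sigma> y) \<and>
                  (\<forall>x y. \<sigma> (x * y) = \<sigma> x * \<sigma> y) \<and> \<sigma> 1 = 1"

definition skew_polys :: "(nat \<Rightarrow> 'a::zero) set" where
  "skew_polys = {p. \<exists>N. \<forall>n\<ge>N. p n = 0}"

definition deg_less :: "(nat \<Rightarrow> 'a::zero) \<Rightarrow> nat \<Rightarrow> bool" where
  "deg_less p m \<longleftrightarrow> (\<forall>n\<ge>m. p n = 0)"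

definition skew_mult :: "('a::division_ring \<Rightarrow> 'a) \<Rightarrow> (nat \<Rightarrow> 'a) \<Rightarrow> (nat \<Rightarrow> 'a) \<Rightarrow> nat \<Rightarrow> 'a" where
  "skew_mult \<sigma> p q = (\<lambda>n. \<Sum>i\<le>n. p i * (\<sigma> ^^ i) (q (n - i)))"

definition skew_monom :: "nat \<Rightarrow> nat \<Rightarrow> 'a::{zero,one}" where
  "skew_monom j = (\<lambda>n. if n = j then 1 else 0)"

definition skew_rem :: "('a::division_ring \<Rightarrow> 'a) \<Rightarrow> (nat \<Rightarrow> 'a) \<Rightarrow> nat \<Rightarrow> (nat \<Rightarrow> 'a) \<Rightarrow> nat \<Rightarrow> 'a" where
  "skew_rem \<sigma> f m g = (THE r. deg_less r m \<and>
      (\<exists>q\<in>skew_polys. g = (\<lambda>n. skew_mult \<sigma> q f n + r n)))"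

definition Sf_carrier :: "nat \<Rightarrow> (nat \<Rightarrow> 'a::zero) set" where
  "Sf_carrier m = {x. deg_less x m}"

definition Sf_mult :: "('a::division_ring \<Rightarrow> 'a) \<Rightarrow> (nat \<Rightarrow> 'a) \<Rightarrow> nat \<Rightarrow> (nat \<Rightarrow> 'a) \<Rightarrow> (nat \<Rightarrow> 'a) \<Rightarrow> nat \<Rightarrow> 'a" where
  "Sf_mult \<sigma> f m g h = skew_rem \<sigma> f m (skew_mult \<sigma> g h)"

definition left_division_algebra :: "('a::division_ring \<Rightarrow> 'a) \<Rightarrow> (nat \<Rightarrow> 'a) \<Rightarrow> nat \<Rightarrow> bool" where
  "left_division_algebra \<sigma> f m \<longleftrightarrow>
     (\<forall>a\<in>Sf_carrier m. a \<noteq> (\<lambda>_. 0) \<longrightarrow> bij_betw (Sf_mult \<sigma> f m a) (Sf_carrier m) (Sf_carrier m))"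

end

theory Submission imports Defs begin

lemma re_zero: assumes "ring_endo s" shows "s 0 = 0"
proof -
  have "s (0 + 0) = s 0 + s 0" using assms unfolding ring_endo_def by blast
  then show ?thesis by simp
qed

lemma re_one: "ring_endo s \<Longrightarrow> s 1 = 1"
  unfolding ring_endo_def by simp

lemma re_nz: assumes "ring_endo s" "x \<noteq> 0" shows "s x \<noteq> 0"
proof
  assume h: "s x = 0"
  have "s (x * inverse x) = s x * s (inverse x)" using assms(1) unfolding ring_endo_def by simp
  then have "s 1 = 0" using h assms(2) by simp
  then show False using re_one[OF assms(1)] by simp
qed

lemma re_funpow: "ring_endo s \<Longrightarrow> ring_endo (s ^^ k)"
  by (induction k) (auto simp: ring_endo_def)

lemma funpow_zero: "ring_endo s \<Longrightarrow> (s ^^ k) 0 = 0"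
  using re_zero re_funpow by blast

lemma funpow_one: "ring_endo s \<Longrightarrow> (s ^^ k) 1 = 1"
  using re_one re_funpow by blast

lemma funpow_nz: "ring_endo s \<Longrightarrow> x \<noteq> 0 \<Longrightarrow> (s ^^ k) x \<noteq> 0"
  using re_nz re_funpow by blast

lemma surj_funpow: fixes s :: "'a \<Rightarrow> 'a" assumes "surj s" shows "surj (s ^^ k)"
proof (induction k)
  case 0
  have "s ^^ 0 = id" by (rule funpow.simps(1))
  then show ?case by simp
next
  case (Suc k)
  have "s ^^ Suc k = s \<circ> s ^^ k" by (rule funpow.simps(2))
  then show ?case using comp_surj[OF Suc.IH assms] by simp
qed

lemma sm_add: "skew_mult s (\<lambda>n. p n + q n) f n = skew_mult s p f n + skew_mult s q f n"
  unfolding skew_mult_def by (simp add: distrib_right sum.distrib)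

lemma sm_diff: "skew_mult s (\<lambda>n. p n - q n) f n = skew_mult s p f n - skew_mult s q f n"
  unfolding skew_mult_def by (simp add: left_diff_distrib sum_subtractf)

lemma sm_zero: "skew_mult s (\<lambda>_. 0) f n = 0"
  unfolding skew_mult_def by simp

lemma sm_monom: "skew_mult s (\<lambda>i. if i = k then c else 0) f n = (if k \<le> n then c * (s ^^ k) (f (n - k)) else 0)"
proof -
  have "skew_mult s (\<lambda>i. if i = k then c else 0) f n = (\<Sum>i\<in>{..n}. if i = k then c * (s ^^ k) (f (n - k)) else 0)"
    unfolding skew_mult_def by (rule sum.cong) auto
  also have "\<dots> = (if k \<le> n then c * (s ^^ k) (f (n - k)) else 0)"
    by (subst sum.delta) auto
  finally show ?thesis .
qed

lemma sm_split: "skew_mult s q f n = q n * (s^^n) (f 0) + (\<Sum>i<n. q i * (s^^i) (f (n - i)))"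
proof -
  have "{..n} = insert n {..<n}" by auto
  then show ?thesis unfolding skew_mult_def by simp
qed

lemma sm_top:
  assumes "ring_endo s" "f m = 1" "\<forall>n>m. f n = 0" "\<forall>i>K. q i = 0"
  shows "skew_mult s q f (K + m) = q K"
proof -
  have "skew_mult s q f (K + m) = (\<Sum>i\<in>{..K+m}. if i = K then q K else 0)"
    unfolding skew_mult_def
  proof (rule sum.cong)
    fix i assume "i \<in> {..K+m}"
    show "q i * (s ^^ i) (f (K + m - i)) = (if i = K then q K else 0)"
    proof (cases "i = K")
      case True then show ?thesis using assms funpow_one[OF assms(1)] by simp
    next
      case False
      show ?thesis
      proof (cases "i < K")
        case True
        then have "f (K + m - i) = 0" using assms(3) by auto
        then show ?thesis using False funpow_zero[OF assms(1)] by simp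
      next
        case False2: False
        then show ?thesis using False assms(4) by simp
      qed
    qed
  qed simp
  also have "\<dots> = q K" by (subst sum.delta) auto
  finally show ?thesis .
qed

lemma sm_deg:
  assumes "ring_endo s" "\<forall>n>m. f n = 0" "deg_less q M"
  shows "deg_less (skew_mult s q f) (M + m)"
  unfolding deg_less_def skew_mult_def
proof (intro allI impI sum.neutral ballI)
  fix n i assume n: "M + m \<le> n" and i: "i \<in> {..n}"
  show "q i * (s ^^ i) (f (n - i)) = 0"
  proof (cases "M \<le> i")
    case True then show ?thesis using assms(3) by (simp add: deg_less_def)
  next
    case False
    then have "f (n - i) = 0" using assms(2) n by auto
    then show ?thesis using funpow_zero[OF assms(1)] by simp
  qed
qed

lemma deg_from_prod:
  assumes "ring_endo s" "f m = 1" "\<forall>n>m. f n = 0" "q \<in> skew_polys"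
    and "deg_less (skew_mult s q f) (M + m)"
  shows "deg_less q M"
proof (rule ccontr)
  assume "\<not> deg_less q M"
  then obtain n where n: "n \<ge> M" "q n \<noteq> 0" by (auto simp: deg_less_def)
  obtain N where N: "\<forall>n\<ge>N. q n = 0" using assms(4) by (auto simp: skew_polys_def)
  define S where "S = {n. q n \<noteq> 0}"
  have fin: "finite S" unfolding S_def
    by (rule finite_subset[of _ "{..<N}"]) (use N not_le in auto)
  have "n \<in> S" using n S_def by simp
  define K where "K = Max S"
  have KS: "K \<in> S" using Max_in[OF fin] \<open>n \<in> S\<close> K_def by blast
  have "n \<le> K" using fin \<open>n \<in> S\<close> K_def by simp
  have top: "\<forall>i>K. q i = 0"
  proof (intro allI impI)
    fix i assume "K < i"
    show "q i = 0"
    proof (rule ccontr)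
      assume "q i \<noteq> 0"
      then have "i \<in> S" using S_def by simp
      then have "i \<le> K" using Max_ge[OF fin] K_def by simp
      then show False using \<open>K < i\<close> by simp
    qed
  qed
  have "skew_mult s q f (K + m) = q K" using sm_top[OF assms(1-3) top] .
  moreover have "skew_mult s q f (K + m) = 0" using assms(5) \<open>n \<le> K\<close> n(1)
    by (simp add: deg_less_def)
  ultimately show False using KS S_def by simp
qed


lemma div_exists:
  assumes "ring_endo s" "f m = 1" "\<forall>n>m. f n = 0"
  shows "deg_less g N \<Longrightarrow> \<exists>q\<in>skew_polys. \<exists>r. deg_less r m \<and> g = (\<lambda>n. skew_mult s q f n + r n)"
proof (induction N arbitrary: g)
  case 0
  have "(\<lambda>_. 0) \<in> skew_polys" by (simp add: skew_polys_def)
  moreover have "deg_less g m" using 0 by (simp add: deg_less_def)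
  ultimately show ?case by (intro bexI[of _ "\<lambda>_. 0"]) (auto simp: sm_zero)
next
  case (Suc N)
  show ?case
  proof (cases "Suc N \<le> m")
    case True
    have "(\<lambda>_. 0) \<in> skew_polys" by (simp add: skew_polys_def)
    moreover have "deg_less g m" using Suc.prems True by (simp add: deg_less_def)
    ultimately show ?thesis by (intro bexI[of _ "\<lambda>_. 0"]) (auto simp: sm_zero)
  next
    case False
    define c where "c = g N"
    define mo :: "nat \<Rightarrow> 'a" where "mo = (\<lambda>i. if i = N - m then c else 0)"
    define g' where "g' = (\<lambda>n. g n - skew_mult s mo f n)"
    have "deg_less g' N"
      unfolding deg_less_def
    proof (intro allI impI)
      fix n assume n: "N \<le> n"
      show "g' n = 0"
      proof (cases "n = N")
        case True
        have "N - m \<le> N" "N - (N - m) = m" using False by auto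
        then show ?thesis using True assms funpow_one[OF assms(1)]
          unfolding g'_def mo_def sm_monom c_def by simp
      next
        case False2: False
        then have "g n = 0" using Suc.prems n by (simp add: deg_less_def)
        moreover have "f (n - (N - m)) = 0" using assms(3) n False2 False by auto
        ultimately show ?thesis using funpow_zero[OF assms(1)]
          unfolding g'_def mo_def sm_monom by simp
      qed
    qed
    then obtain q' r where q': "q' \<in> skew_polys" "deg_less r m" "g' = (\<lambda>n. skew_mult s q' f n + r n)"
      using Suc.IH by blast
    define q where "q = (\<lambda>i. q' i + mo i)"
    obtain N' where N': "\<forall>n\<ge>N'. q' n = 0" using q'(1) by (auto simp: skew_polys_def)
    have "q \<in> skew_polys" unfolding skew_polys_def q_def mo_def
      by (rule CollectI, rule exI[of _ "max N' (Suc N)"]) (use N' in auto)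
    moreover have "g = (\<lambda>n. skew_mult s q f n + r n)"
    proof
      fix n
      have "g n = g' n + skew_mult s mo f n" unfolding g'_def by simp
      also have "\<dots> = skew_mult s q f n + r n" using q'(3) unfolding q_def sm_add
        by (simp add: algebra_simps)
      finally show "g n = skew_mult s q f n + r n" .
    qed
    ultimately show ?thesis using q'(2) by blast
  qed
qed

lemma rem_unique:
  assumes "ring_endo s" "f m = 1" "\<forall>n>m. f n = 0"
    and "deg_less r1 m" "deg_less r2 m" "q1 \<in> skew_polys" "q2 \<in> skew_polys"
    and eq: "(\<lambda>n. skew_mult s q1 f n + r1 n) = (\<lambda>n. skew_mult s q2 f n + r2 n)"
  shows "r1 = r2"
proof -
  define q where "q = (\<lambda>n. q1 n - q2 n)"
  obtain N1 where N1: "\<forall>n\<ge>N1. q1 n = 0" using assms(6) by (auto simp: skew_polys_def)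
  obtain N2 where N2: "\<forall>n\<ge>N2. q2 n = 0" using assms(7) by (auto simp: skew_polys_def)
  have qp: "q \<in> skew_polys" unfolding skew_polys_def q_def
    by (rule CollectI, rule exI[of _ "max N1 N2"]) (use N1 N2 in auto)
  have qf: "skew_mult s q f n = r2 n - r1 n" for n
    using fun_cong[OF eq, of n] unfolding q_def sm_diff by (simp add: algebra_simps)
  have "deg_less (skew_mult s q f) (0 + m)" using assms(4,5) qf by (simp add: deg_less_def)
  then have "deg_less q 0" using deg_from_prod[OF assms(1-3) qp] by blast
  then have "q = (\<lambda>_. 0)" by (auto simp: deg_less_def)
  then have "skew_mult s q f n = 0" for n using sm_zero by simp
  then have "r2 n - r1 n = 0" for n using qf[of n] by simp
  then show ?thesis by auto
qed

lemma rem_eq: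
  assumes "ring_endo s" "f m = 1" "\<forall>n>m. f n = 0"
    and "deg_less r m" "q \<in> skew_polys" "g = (\<lambda>n. skew_mult s q f n + r n)"
  shows "skew_rem s f m g = r"
  unfolding skew_rem_def
proof (rule the_equality)
  show "deg_less r m \<and> (\<exists>q\<in>skew_polys. g = (\<lambda>n. skew_mult s q f n + r n))" using assms by blast
next
  fix r' assume "deg_less r' m \<and> (\<exists>q\<in>skew_polys. g = (\<lambda>n. skew_mult s q f n + r' n))"
  then obtain q' where o: "deg_less r' m" "q' \<in> skew_polys" "g = (\<lambda>n. skew_mult s q' f n + r' n)" by blast
  have "(\<lambda>n. skew_mult s q' f n + r' n) = (\<lambda>n. skew_mult s q f n + r n)" using o(3) assms(6) by simp
  from rem_unique[OF assms(1-3) o(1) assms(4) o(2) assms(5) this] show "r' = r" .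
qed

lemma rem_prop:
  assumes "ring_endo s" "f m = 1" "\<forall>n>m. f n = 0" "deg_less g N"
  shows "deg_less (skew_rem s f m g) m \<and> (\<exists>q\<in>skew_polys. g = (\<lambda>n. skew_mult s q f n + skew_rem s f m g n))"
proof -
  obtain q r where "q \<in> skew_polys" "deg_less r m" "g = (\<lambda>n. skew_mult s q f n + r n)"
    using div_exists[OF assms(1-3) assms(4)] by blast
  moreover then have e: "skew_rem s f m g = r" using rem_eq[OF assms(1-3)] by blast
  ultimately show ?thesis unfolding e by blast
qed

lemma tri:
  assumes "ring_endo s" "f 0 \<noteq> 0"
  shows "\<exists>q. deg_less q k \<and> (\<forall>n<k. skew_mult s q f n + r n = 0)"
proof (induction k)
  case 0 show ?case by (rule exI[of _ "\<lambda>_. 0"]) (simp add: deg_less_def)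
next
  case (Suc k)
  then obtain q where q: "deg_less q k" "\<forall>n<k. skew_mult s q f n + r n = 0" by blast
  define a where "a = skew_mult s q f k + r k"
  define d where "d = (s ^^ k) (f 0)"
  have d: "d \<noteq> 0" unfolding d_def using funpow_nz[OF assms] .
  define c where "c = - a * inverse d"
  define q' where "q' = (\<lambda>i. q i + (if i = k then c else 0))"
  have "deg_less q' (Suc k)" using q(1) unfolding q'_def deg_less_def by auto
  moreover have "\<forall>n<Suc k. skew_mult s q' f n + r n = 0"
  proof (intro allI impI)
    fix n assume n: "n < Suc k"
    have e: "skew_mult s q' f n = skew_mult s q f n + (if k \<le> n then c * (s ^^ k) (f (n - k)) else 0)"
      unfolding q'_def sm_add sm_monom ..
    show "skew_mult s q' f n + r n = 0"
    proof (cases "n = k")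
      case True
      have "c * d = - a" unfolding c_def using d by (simp add: mult.assoc)
      then show ?thesis using e True unfolding a_def d_def by (simp add: algebra_simps)
    next
      case False
      then show ?thesis using e q(2) n by simp
    qed
  qed
  ultimately show ?case by blast
qed

lemma low_zero:
  assumes "ring_endo s" "f 0 \<noteq> 0" "\<forall>n<k. skew_mult s q f n = 0"
  shows "n < k \<Longrightarrow> q n = 0"
proof (induction n rule: less_induct)
  case (less n)
  have "(\<Sum>i<n. q i * (s^^i) (f (n - i))) = 0" using less by (intro sum.neutral) auto
  then have "q n * (s^^n) (f 0) = 0" using sm_split[of s q f n] assms(3) less.prems by simp
  then show ?case using funpow_nz[OF assms(1,2)] by simp
qed

lemma tj: "skew_mult s (skew_monom j) x n = (if j \<le> n then (s ^^ j) (x (n - j)) else 0)"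
  unfolding skew_monom_def using sm_monom[of s j 1 x n] by simp


lemma deg_polys: "deg_less q k \<Longrightarrow> q \<in> skew_polys"
  unfolding deg_less_def skew_polys_def by blast

theorem mainTheorem7:
  fixes \<sigma> :: "'a::division_ring \<Rightarrow> 'a" and f :: "nat \<Rightarrow> 'a" and m :: nat
  assumes "ring_endo \<sigma>"
    and "m \<ge> 2"
    and "f m = 1" and "\<forall>n>m. f n = 0"
    and "f 0 \<noteq> 0"
  shows "(\<forall>j\<in>{1..m-1}. (Sf_mult \<sigma> f m (skew_monom j) ` Sf_carrier m = Sf_carrier m \<longleftrightarrow> surj \<sigma>))
         \<and> (\<not> surj \<sigma> \<longrightarrow> \<not> left_division_algebra \<sigma> f m)"
proof -
  note A = assms(1,3,4)
  have gdeg: "deg_less (skew_mult \<sigma> (skew_monom j) x) (m + j)" if "x \<in> Sf_carrier m" for x j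
    using that funpow_zero[OF assms(1)] unfolding Sf_carrier_def deg_less_def tj by auto
  have img_sub: "Sf_mult \<sigma> f m (skew_monom j) ` Sf_carrier m \<subseteq> Sf_carrier m" for j
  proof
    fix y assume "y \<in> Sf_mult \<sigma> f m (skew_monom j) ` Sf_carrier m"
    then obtain x where x: "x \<in> Sf_carrier m" "y = Sf_mult \<sigma> f m (skew_monom j) x" by blast
    have "deg_less (skew_rem \<sigma> f m (skew_mult \<sigma> (skew_monom j) x)) m"
      using rem_prop[OF A gdeg[OF x(1)]] by (rule conjunct1)
    then show "y \<in> Sf_carrier m" using x(2) unfolding Sf_mult_def Sf_carrier_def by simp
  qed
  have part1: "Sf_mult \<sigma> f m (skew_monom j) ` Sf_carrier m = Sf_carrier m \<longleftrightarrow> surj \<sigma>"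
    if j: "j \<in> {1..m-1}" for j
  proof
    assume img: "Sf_mult \<sigma> f m (skew_monom j) ` Sf_carrier m = Sf_carrier m"
    show "surj \<sigma>" unfolding surj_def
    proof
      fix b
      define d where "d = (\<sigma>^^(j-1)) (f 0)"
      have d: "d \<noteq> 0" unfolding d_def using funpow_nz[OF assms(1,5)] .
      define r where "r = (\<lambda>n. if n = j - 1 then - (b*d) else 0)"
      have "r \<in> Sf_carrier m" unfolding r_def Sf_carrier_def deg_less_def using j by auto
      then have "r \<in> Sf_mult \<sigma> f m (skew_monom j) ` Sf_carrier m" using img by simp
      then obtain x where x: "x \<in> Sf_carrier m" "Sf_mult \<sigma> f m (skew_monom j) x = r"
        by blast
      let ?g = "skew_mult \<sigma> (skew_monom j) x"
      have gd: "deg_less ?g (m+j)" using gdeg[OF x(1)] .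
      have rr: "skew_rem \<sigma> f m ?g = r" using x(2) unfolding Sf_mult_def .
      have "\<exists>q\<in>skew_polys. ?g = (\<lambda>n. skew_mult \<sigma> q f n + skew_rem \<sigma> f m ?g n)"
        using rem_prop[OF A gd] by (rule conjunct2)
      then have "\<exists>q\<in>skew_polys. ?g = (\<lambda>n. skew_mult \<sigma> q f n + r n)" unfolding rr .
      then obtain q where q: "q \<in> skew_polys" "?g = (\<lambda>n. skew_mult \<sigma> q f n + r n)" by blast
      have eqn: "skew_mult \<sigma> q f n = ?g n - r n" for n using fun_cong[OF q(2), of n] by simp
      have "deg_less (skew_mult \<sigma> q f) (j + m)"
        unfolding deg_less_def
      proof (intro allI impI)
        fix n assume n: "j + m \<le> n"
        then have "?g n = 0" using gd by (simp add: deg_less_def)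
        moreover have "r n = 0" using n j unfolding r_def by auto
        ultimately show "skew_mult \<sigma> q f n = 0" using eqn by simp
      qed
      then have qj: "deg_less q j" using deg_from_prod[OF A q(1)] by blast
      have low: "\<forall>n<j-1. skew_mult \<sigma> q f n = 0"
        using eqn unfolding tj r_def by auto
      have qz: "\<forall>n<j-1. q n = 0" using low_zero[of \<sigma> f "j-1" q, OF assms(1,5) low] by blast
      have "(\<Sum>i<j-1. q i * (\<sigma>^^i) (f (j - 1 - i))) = 0" using qz by (intro sum.neutral) auto
      then have "skew_mult \<sigma> q f (j-1) = q (j-1) * d" unfolding d_def using sm_split[of \<sigma> q f "j-1"] by simp
      moreover have "skew_mult \<sigma> q f (j-1) = b * d" using eqn[of "j-1"] j unfolding tj r_def by auto
      ultimately have "q (j-1) * d = b * d" by simp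
      then have qb: "q (j-1) = b" using d by simp
      have top: "\<forall>i>j-1. q i = 0" using qj unfolding deg_less_def by auto
      have "skew_mult \<sigma> q f (j-1+m) = q (j-1)" using sm_top[OF A top] .
      moreover have "skew_mult \<sigma> q f (j-1+m) = (\<sigma>^^j) (x (m-1))"
      proof -
        have "j \<le> j - 1 + m" "j - 1 + m - j = m - 1" "j - 1 + m \<noteq> j - 1" "j + m - Suc 0 \<noteq> j - Suc 0" using j assms(2) by auto
        then show ?thesis using eqn[of "j-1+m"] unfolding tj r_def by simp
      qed
      ultimately have "b = (\<sigma>^^j) (x (m-1))" using qb by simp
      moreover have "j = Suc (j-1)" using j by auto
      moreover have "(\<sigma>^^Suc (j-1)) (x (m-1)) = \<sigma> ((\<sigma>^^(j-1)) (x (m-1)))" by simp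
      ultimately have "b = \<sigma> ((\<sigma>^^(j-1)) (x (m-1)))" by simp
      then show "\<exists>y. b = \<sigma> y" by blast
    qed
  next
    assume sj: "surj \<sigma>"
    show "Sf_mult \<sigma> f m (skew_monom j) ` Sf_carrier m = Sf_carrier m"
    proof
      show "Sf_mult \<sigma> f m (skew_monom j) ` Sf_carrier m \<subseteq> Sf_carrier m" by (rule img_sub)
      show "Sf_carrier m \<subseteq> Sf_mult \<sigma> f m (skew_monom j) ` Sf_carrier m"
      proof
        fix r :: "nat \<Rightarrow> 'a" assume r: "r \<in> Sf_carrier m"
        obtain q where q: "deg_less q j" "\<forall>n<j. skew_mult \<sigma> q f n + r n = 0"
          using tri[of \<sigma> f j r, OF assms(1,5)] by blast
        define h where "h = (\<lambda>n. skew_mult \<sigma> q f n + r n)"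
        have hdeg: "deg_less h (j+m)"
          using sm_deg[OF assms(1,4) q(1)] r unfolding h_def deg_less_def Sf_carrier_def by auto
        have sjj: "surj (\<sigma>^^j)" using surj_funpow[OF sj] .
        define x where "x = (\<lambda>k. if k < m then inv (\<sigma>^^j) (h (k+j)) else 0)"
        have xc: "x \<in> Sf_carrier m" unfolding x_def Sf_carrier_def deg_less_def by auto
        have "skew_mult \<sigma> (skew_monom j) x = h"
        proof
          fix n
          show "skew_mult \<sigma> (skew_monom j) x n = h n"
          proof (cases "n < j")
            case True then show ?thesis using q(2) unfolding tj h_def by simp
          next
            case False
            show ?thesis
            proof (cases "n - j < m")
              case True
              then show ?thesis using False unfolding tj x_def by (simp add: surj_f_inv_f[OF sjj])
            next
              case False2: False
              then have "h n = 0" using hdeg False by (simp add: deg_less_def)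
              then show ?thesis using False False2 funpow_zero[OF assms(1)] unfolding tj x_def by simp
            qed
          qed
        qed
        moreover have "skew_rem \<sigma> f m h = r"
          by (rule rem_eq[OF A _ deg_polys[OF q(1)]]) (use r in \<open>auto simp: Sf_carrier_def h_def\<close>)
        ultimately have rx: "Sf_mult \<sigma> f m (skew_monom j) x = r"
          unfolding Sf_mult_def by simp
        show "r \<in> Sf_mult \<sigma> f m (skew_monom j) ` Sf_carrier m"
          by (rule image_eqI[OF _ xc]) (rule rx[symmetric])
      qed
    qed
  qed
  have part2: "\<not> left_division_algebra \<sigma> f m" if ns: "\<not> surj \<sigma>"
  proof
    assume lda: "left_division_algebra \<sigma> f m"
    have "1 \<in> {1..m-1}" using assms(2) by auto
    have c: "skew_monom 1 \<in> Sf_carrier m" using assms(2) unfolding Sf_carrier_def deg_less_def skew_monom_def by auto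
    have nz: "skew_monom 1 \<noteq> (\<lambda>_. 0::'a)"
    proof
      assume "skew_monom 1 = (\<lambda>_. 0::'a)"
      then have "skew_monom 1 (1::nat) = (0::'a)" by simp
      then show False by (simp add: skew_monom_def)
    qed
    have "bij_betw (Sf_mult \<sigma> f m (skew_monom 1)) (Sf_carrier m) (Sf_carrier m)"
      using mp[OF bspec[OF lda[unfolded left_division_algebra_def] c] nz] .
    then have "Sf_mult \<sigma> f m (skew_monom 1) ` Sf_carrier m = Sf_carrier m" by (simp add: bij_betw_def)
    then have "surj \<sigma>" by (rule iffD1[OF part1[OF \<open>1 \<in> {1..m-1}\<close>]])
    with ns show False by contradiction
  qed
  show ?thesis
  proof (intro conjI ballI impI)
    fix j assume "j \<in> {1..m-1}"
    then show "Sf_mult \<sigma> f m (skew_monom j) ` Sf_carrier m = Sf_carrier m \<longleftrightarrow> surj \<sigma>" by (rule part1)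
  next
    assume "\<not> surj \<sigma>"
    then show "\<not> left_division_algebra \<sigma> f m" by (rule part2)
  qed
qed

end
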